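(* Under the standing assumptions below, one of the following holds: (I') there exist maps $u_1:M\to M'$ and $v_1:N\to N'$ such that for all $m\in M$, $n\in N$: $\phi\left(\left[\begin{smallmatrix} 1 & m\\ 0 & 0\end{smallmatrix}\right]\right)=\left[\begin{smallmatrix} 1 & u_1(m)\\ v_1(0) & 0\end{smallmatrix}\right]$ and $\phi\left(\left[\begin{smallmatrix} 1 & 0\\ n & 0\end{smallmatrix}\right]\right)=\left[\begin{smallmatrix} 1 & u_1(0)\\ v_1(n) & 0\end{smallmatrix}\right]$; (I'') there exist maps $u_2:N\to M'$ and $v_2:M\to N'$ such that for all $m\in M$, $n\in N$: $\phi\left(\left[\begin{smallmatrix} 1 & m\\ 0 & 0\end{smallmatrix}\right]\right)=\left[\begin{smallmatrix} 0 & u_2(0)\\ v_2(m) & 1\end{smallmatrix}\right]$ and $\phi\left(\left[\begin{smallmatrix} 1 & 0\\ n & 0\end{smallmatrix}\right]\right)=\left[\begin{smallmatrix} 0 & u_2(n)\\ v_2(0) & 1\end{smallmatrix}\right]$.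
   Context: All rings have an identity $1\neq 0$. Standing assumptions: $R,S,R',S'$ are rings whose only idempotents are $0$ and $1$; $M$ is an $R$-$S$-bimodule, $N$ an $S$-$R$-bimodule, $M'$ an $R'$-$S'$-bimodule, $N'$ an $S'$-$R'$-bimodule; $T=\left[\begin{smallmatrix} R & M\\ N & S\end{smallmatrix}\right]$ and $T'=\left[\begin{smallmatrix} R' & M'\\ N' & S'\end{smallmatrix}\right]$ are the Morita context rings with both Morita maps zero, i.e. the sets of formal matrices with entrywise addition and product $\left[\begin{smallmatrix} r & m\\ n & s\end{smallmatrix}\right]\left[\begin{smallmatrix} r' & m'\\ n' & s'\end{smallmatrix}\right]=\left[\begin{smallmatrix} rr' & rm'+ms'\\ nr'+sn' & ss'\end{smallmatrix}\right]$; and $\phi:T\to T'$ is a ring isomorphism. *)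

theory Defs
  imports Main
begin

definition nontriv_ring_trivial_idem :: "'r::ring_1 itself \<Rightarrow> bool" where
  "nontriv_ring_trivial_idem _ \<longleftrightarrow> (1::'r) \<noteq> 0 \<and> (\<forall>e::'r. e * e = e \<longrightarrow> e = 0 \<or> e = 1)"

definition bimodule ::
  "('a::ring_1 \<Rightarrow> 'm::ab_group_add \<Rightarrow> 'm) \<Rightarrow> ('m \<Rightarrow> 'b::ring_1 \<Rightarrow> 'm) \<Rightarrow> bool" where
  "bimodule l r \<longleftrightarrow>
     (\<forall>a x y. l a (x + y) = l a x + l a y) \<and>
     (\<forall>a a' x. l (a + a') x = l a x + l a' x) \<and>
     (\<forall>a a' x. l (a * a') x = l a (l a' x)) \<and>
     (\<forall>x. l 1 x = x) \<and>
     (\<forall>b x y. r (x + y) b = r x b + r y b) \<and>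
     (\<forall>b b' x. r x (b + b') = r x b + r x b') \<and>
     (\<forall>b b' x. r x (b * b') = r (r x b) b') \<and>
     (\<forall>x. r x 1 = x) \<and>
     (\<forall>a b x. l a (r x b) = r (l a x) b)"

text \<open>Morita context ring T = [R M; N S] with both Morita maps zero; elements are
  quadruples (r, m, n, s) standing for the matrix [r m; n s].
  lM, rM: the left R- and right S-actions on M; lN, rN: the left S- and right R-actions on N.\<close>
type_synonym ('r,'m,'n,'s) morita = "'r \<times> 'm \<times> 'n \<times> 's"

definition morita_add ::
  "('r::ring_1,'m::ab_group_add,'n::ab_group_add,'s::ring_1) morita \<Rightarrow> ('r,'m,'n,'s) morita \<Rightarrow> ('r,'m,'n,'s) morita" where
  "morita_add x y = (case x of (r,m,n,s) \<Rightarrow> case y of (r',m',n',s') \<Rightarrow>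
     (r + r', m + m', n + n', s + s'))"

definition morita_mult ::
  "('r::ring_1 \<Rightarrow> 'm::ab_group_add \<Rightarrow> 'm) \<Rightarrow> ('m \<Rightarrow> 's::ring_1 \<Rightarrow> 'm) \<Rightarrow>
   ('s \<Rightarrow> 'n::ab_group_add \<Rightarrow> 'n) \<Rightarrow> ('n \<Rightarrow> 'r \<Rightarrow> 'n) \<Rightarrow>
   ('r,'m,'n,'s) morita \<Rightarrow> ('r,'m,'n,'s) morita \<Rightarrow> ('r,'m,'n,'s) morita" where
  "morita_mult lM rM lN rN x y = (case x of (r,m,n,s) \<Rightarrow> case y of (r',m',n',s') \<Rightarrow>
     (r * r', lM r m' + rM m s', rN n r' + lN s n', s * s'))"

definition morita_one :: "('r::ring_1,'m::ab_group_add,'n::ab_group_add,'s::ring_1) morita" where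
  "morita_one = (1, 0, 0, 1)"

definition morita_ring_iso ::
  "('r::ring_1 \<Rightarrow> 'm::ab_group_add \<Rightarrow> 'm) \<Rightarrow> ('m \<Rightarrow> 's::ring_1 \<Rightarrow> 'm) \<Rightarrow>
   ('s \<Rightarrow> 'n::ab_group_add \<Rightarrow> 'n) \<Rightarrow> ('n \<Rightarrow> 'r \<Rightarrow> 'n) \<Rightarrow>
   ('r2::ring_1 \<Rightarrow> 'm2::ab_group_add \<Rightarrow> 'm2) \<Rightarrow> ('m2 \<Rightarrow> 's2::ring_1 \<Rightarrow> 'm2) \<Rightarrow>
   ('s2 \<Rightarrow> 'n2::ab_group_add \<Rightarrow> 'n2) \<Rightarrow> ('n2 \<Rightarrow> 'r2 \<Rightarrow> 'n2) \<Rightarrow>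
   (('r,'m,'n,'s) morita \<Rightarrow> ('r2,'m2,'n2,'s2) morita) \<Rightarrow> bool" where
  "morita_ring_iso lM rM lN rN lM' rM' lN' rN' \<phi> \<longleftrightarrow>
     bij \<phi> \<and>
     (\<forall>x y. \<phi> (morita_add x y) = morita_add (\<phi> x) (\<phi> y)) \<and>
     (\<forall>x y. \<phi> (morita_mult lM rM lN rN x y) = morita_mult lM' rM' lN' rN' (\<phi> x) (\<phi> y)) \<and>
     \<phi> morita_one = morita_one"

end

theory Submission
  imports Defs
begin

lemma bim_facts:
  assumes "bimodule l r"
  shows "l 0 x = 0" "l a 0 = 0" "r x 0 = 0" "r 0 b = 0" "l 1 x = x" "r x 1 = x"
proof -
  have A: "\<And>a x y. l a (x + y) = l a x + l a y" "\<And>a a' x. l (a + a') x = l a x + l a' x"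
    "\<And>b x y. r (x + y) b = r x b + r y b" "\<And>b b' x. r x (b + b') = r x b + r x b'"
    using assms unfolding bimodule_def by simp_all
  have "l (0+0) x = l 0 x + l 0 x" by (rule A(2))
  then show "l 0 x = 0" by simp
  have "l a (0+0) = l a 0 + l a 0" by (rule A(1))
  then show "l a 0 = 0" by simp
  have "r x (0+0) = r x 0 + r x 0" by (rule A(4))
  then show "r x 0 = 0" by simp
  have "r (0+0) b = r 0 b + r 0 b" by (rule A(3))
  then show "r 0 b = 0" by simp
  show "l 1 x = x" "r x 1 = x" using assms unfolding bimodule_def by blast+
qed

lemma idem01:
  assumes "nontriv_ring_trivial_idem TYPE('r::ring_1)" "(e::'r) * e = e"
  shows "e = 0 \<or> e = 1"
  using assms unfolding nontriv_ring_trivial_idem_def by blast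

lemma onez: "nontriv_ring_trivial_idem TYPE('r::ring_1) \<Longrightarrow> (1::'r) \<noteq> 0"
  unfolding nontriv_ring_trivial_idem_def by blast

theorem corollary4p5:
  fixes lM :: "'r::ring_1 \<Rightarrow> 'm::ab_group_add \<Rightarrow> 'm" and rM :: "'m \<Rightarrow> 's::ring_1 \<Rightarrow> 'm"
    and lN :: "'s \<Rightarrow> 'n::ab_group_add \<Rightarrow> 'n" and rN :: "'n \<Rightarrow> 'r \<Rightarrow> 'n"
    and lM' :: "'r2::ring_1 \<Rightarrow> 'm2::ab_group_add \<Rightarrow> 'm2" and rM' :: "'m2 \<Rightarrow> 's2::ring_1 \<Rightarrow> 'm2"
    and lN' :: "'s2 \<Rightarrow> 'n2::ab_group_add \<Rightarrow> 'n2" and rN' :: "'n2 \<Rightarrow> 'r2 \<Rightarrow> 'n2"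
    and \<phi> :: "('r,'m,'n,'s) morita \<Rightarrow> ('r2,'m2,'n2,'s2) morita"
  assumes "nontriv_ring_trivial_idem TYPE('r)" and "nontriv_ring_trivial_idem TYPE('s)"
    and "nontriv_ring_trivial_idem TYPE('r2)" and "nontriv_ring_trivial_idem TYPE('s2)"
    and "bimodule lM rM" and "bimodule lN rN" and "bimodule lM' rM'" and "bimodule lN' rN'"
    and "morita_ring_iso lM rM lN rN lM' rM' lN' rN' \<phi>"
  shows "(\<exists>(u1 :: 'm \<Rightarrow> 'm2) (v1 :: 'n \<Rightarrow> 'n2). \<forall>m n.
            \<phi> (1, m, 0, 0) = (1, u1 m, v1 0, 0) \<and> \<phi> (1, 0, n, 0) = (1, u1 0, v1 n, 0))
       \<or> (\<exists>(u2 :: 'n \<Rightarrow> 'm2) (v2 :: 'm \<Rightarrow> 'n2). \<forall>m n.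
            \<phi> (1, m, 0, 0) = (0, u2 0, v2 m, 1) \<and> \<phi> (1, 0, n, 0) = (0, u2 n, v2 0, 1))"
proof -
  note b1 = bim_facts[OF assms(5)] and b2 = bim_facts[OF assms(6)]
    and b3 = bim_facts[OF assms(7)] and b4 = bim_facts[OF assms(8)]
  have bij: "bij \<phi>" and hadd: "\<And>x y. \<phi> (morita_add x y) = morita_add (\<phi> x) (\<phi> y)"
    and hmul: "\<And>x y. \<phi> (morita_mult lM rM lN rN x y) = morita_mult lM' rM' lN' rN' (\<phi> x) (\<phi> y)"
    and hone: "\<phi> (1,0,0,1) = (1,0,0,1)"
    using assms(9) unfolding morita_ring_iso_def morita_one_def by auto
  have hzero: "\<phi> (0,0,0,0) = (0,0,0,0)"
  proof -
    obtain z1 z2 z3 z4 where z: "\<phi> (0,0,0,0) = (z1,z2,z3,z4)" by (cases "\<phi> (0,0,0,0)") auto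
    have "\<phi> (morita_add (0,0,0,0) (0,0,0,0)) = morita_add (\<phi> (0,0,0,0)) (\<phi> (0,0,0,0))" by (rule hadd)
    then show ?thesis using z by (simp add: morita_add_def)
  qed
  obtain a1 a b a2 where E: "\<phi> (1,0,0,0) = (a1,a,b,a2)" by (cases "\<phi> (1,0,0,0)") auto
  have "\<phi> (morita_mult lM rM lN rN (1,0,0,0) (1,0,0,0)) = morita_mult lM' rM' lN' rN' (\<phi> (1,0,0,0)) (\<phi> (1,0,0,0))"
    by (rule hmul)
  then have idem: "a1 * a1 = a1" "a2 * a2 = a2" "lM' a1 a + rM' a a2 = a" "rN' b a1 + lN' a2 b = b"
    using E b1 b2 by (simp_all add: morita_mult_def)
  have ne0: "(a1,a,b,a2) \<noteq> (0,0,0,0)"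
  proof
    assume "(a1,a,b,a2) = (0,0,0,0)"
    then have "\<phi> (1,0,0,0) = \<phi> (0,0,0,0)" using E hzero by simp
    then have "(1::'r,0::'m,0::'n,0::'s) = (0,0,0,0)" by (rule injD[OF bij_is_inj[OF bij]])
    then show False using onez[OF assms(1)] by simp
  qed
  have ne1: "(a1,a,b,a2) \<noteq> (1,0,0,1)"
  proof
    assume "(a1,a,b,a2) = (1,0,0,1)"
    then have "\<phi> (1,0,0,0) = \<phi> (1,0,0,1)" using E hone by simp
    then have "(1::'r,0::'m,0::'n,0::'s) = (1,0,0,1)" by (rule injD[OF bij_is_inj[OF bij]])
    then show False using onez[OF assms(2)] by simp
  qed
  have c1: "a1 = 0 \<or> a1 = 1" by (rule idem01[OF assms(3) idem(1)])
  have c2: "a2 = 0 \<or> a2 = 1" by (rule idem01[OF assms(4) idem(2)])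
  have P: "\<And>m. \<exists>r m' n' s. \<phi> (0,m,0,0) = (r,m',n',s) \<and>
      morita_mult lM' rM' lN' rN' (a1,a,b,a2) (r,m',n',s) = (r,m',n',s) \<and>
      morita_mult lM' rM' lN' rN' (r,m',n',s) (a1,a,b,a2) = (0,0,0,0) \<and>
      \<phi> (1,m,0,0) = morita_add (a1,a,b,a2) (r,m',n',s)"
  proof -
    fix m
    obtain r m' n' s where Pd: "\<phi> (0,m,0,0) = (r,m',n',s)" by (cases "\<phi> (0,m,0,0)") auto
    have "\<phi> (morita_mult lM rM lN rN (1,0,0,0) (0,m,0,0)) = morita_mult lM' rM' lN' rN' (\<phi> (1,0,0,0)) (\<phi> (0,m,0,0))"
      by (rule hmul)
    moreover have "\<phi> (morita_mult lM rM lN rN (0,m,0,0) (1,0,0,0)) = morita_mult lM' rM' lN' rN' (\<phi> (0,m,0,0)) (\<phi> (1,0,0,0))"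
      by (rule hmul)
    moreover have "\<phi> (morita_add (1,0,0,0) (0,m,0,0)) = morita_add (\<phi> (1,0,0,0)) (\<phi> (0,m,0,0))"
      by (rule hadd)
    ultimately show "?thesis m" using Pd E hzero b1 b2
      by (simp add: morita_mult_def morita_add_def)
  qed
  have Q: "\<And>n. \<exists>r m' n' s. \<phi> (0,0,n,0) = (r,m',n',s) \<and>
      morita_mult lM' rM' lN' rN' (a1,a,b,a2) (r,m',n',s) = (0,0,0,0) \<and>
      morita_mult lM' rM' lN' rN' (r,m',n',s) (a1,a,b,a2) = (r,m',n',s) \<and>
      \<phi> (1,0,n,0) = morita_add (a1,a,b,a2) (r,m',n',s)"
  proof -
    fix n
    obtain r m' n' s where Pd: "\<phi> (0,0,n,0) = (r,m',n',s)" by (cases "\<phi> (0,0,n,0)") auto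
    have "\<phi> (morita_mult lM rM lN rN (1,0,0,0) (0,0,n,0)) = morita_mult lM' rM' lN' rN' (\<phi> (1,0,0,0)) (\<phi> (0,0,n,0))"
      by (rule hmul)
    moreover have "\<phi> (morita_mult lM rM lN rN (0,0,n,0) (1,0,0,0)) = morita_mult lM' rM' lN' rN' (\<phi> (0,0,n,0)) (\<phi> (1,0,0,0))"
      by (rule hmul)
    moreover have "\<phi> (morita_add (1,0,0,0) (0,0,n,0)) = morita_add (\<phi> (1,0,0,0)) (\<phi> (0,0,n,0))"
      by (rule hadd)
    ultimately show "?thesis n" using Pd E hzero b1 b2
      by (simp add: morita_mult_def morita_add_def)
  qed
  show ?thesis
  proof (cases "a1 = 1 \<and> a2 = 0")
    case True
    have Pm: "\<And>m. \<exists>x. \<phi> (1,m,0,0) = (1,x,b,0)"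
    proof -
      fix m
      from P[of m] obtain r m' n' s where h: "morita_mult lM' rM' lN' rN' (a1,a,b,a2) (r,m',n',s) = (r,m',n',s)"
        "morita_mult lM' rM' lN' rN' (r,m',n',s) (a1,a,b,a2) = (0,0,0,0)"
        "\<phi> (1,m,0,0) = morita_add (a1,a,b,a2) (r,m',n',s)" by blast
      then show "?thesis m" using True b3 b4 by (auto simp: morita_mult_def morita_add_def)
    qed
    have Qn: "\<And>n. \<exists>x. \<phi> (1,0,n,0) = (1,a,x,0)"
    proof -
      fix n
      from Q[of n] obtain r m' n' s where h: "morita_mult lM' rM' lN' rN' (a1,a,b,a2) (r,m',n',s) = (0,0,0,0)"
        "morita_mult lM' rM' lN' rN' (r,m',n',s) (a1,a,b,a2) = (r,m',n',s)"
        "\<phi> (1,0,n,0) = morita_add (a1,a,b,a2) (r,m',n',s)" by blast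
      then show "?thesis n" using True b3 b4 by (auto simp: morita_mult_def morita_add_def)
    qed
    define u1 where "u1 m = fst (snd (\<phi> (1,m,0,0)))" for m
    define v1 where "v1 n = fst (snd (snd (\<phi> (1,0,n,0))))" for n
    have "u1 0 = a" "v1 0 = b" using E True by (simp_all add: u1_def v1_def)
    then have U: "u1 0 = a" "v1 0 = b" .
    have "\<forall>m n. \<phi> (1, m, 0, 0) = (1, u1 m, v1 0, 0) \<and> \<phi> (1, 0, n, 0) = (1, u1 0, v1 n, 0)"
    proof (intro allI conjI)
      fix m n
      obtain x where "\<phi> (1,m,0,0) = (1,x,b,0)" using Pm[of m] by blast
      then show "\<phi> (1,m,0,0) = (1, u1 m, v1 0, 0)" using U by (simp add: u1_def v1_def)
      obtain y where "\<phi> (1,0,n,0) = (1,a,y,0)" using Qn[of n] by blast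
      then show "\<phi> (1,0,n,0) = (1, u1 0, v1 n, 0)" using U by (simp add: u1_def v1_def)
    qed
    then show ?thesis by blast
  next
    case False
    have T: "a1 = 0 \<and> a2 = 1"
    proof -
      { assume "a1 = 0" "a2 = 0"
        then have "a = 0" "b = 0" using idem b3 b4 by auto
        with ne0 \<open>a1 = 0\<close> \<open>a2 = 0\<close> have False by simp }
      moreover
      { assume "a1 = 1" "a2 = 1"
        then have "a + a = a" "b + b = b" using idem b3 b4 by auto
        then have "a = 0" "b = 0" by simp_all
        with ne1 \<open>a1 = 1\<close> \<open>a2 = 1\<close> have False by simp }
      ultimately show ?thesis using c1 c2 False by blast
    qed
    have Pm: "\<And>m. \<exists>x. \<phi> (1,m,0,0) = (0,a,x,1)"
    proof -
      fix m
      from P[of m] obtain r m' n' s where h: "morita_mult lM' rM' lN' rN' (a1,a,b,a2) (r,m',n',s) = (r,m',n',s)"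
        "morita_mult lM' rM' lN' rN' (r,m',n',s) (a1,a,b,a2) = (0,0,0,0)"
        "\<phi> (1,m,0,0) = morita_add (a1,a,b,a2) (r,m',n',s)" by blast
      then show "?thesis m" using T b3 b4 by (auto simp: morita_mult_def morita_add_def)
    qed
    have Qn: "\<And>n. \<exists>x. \<phi> (1,0,n,0) = (0,x,b,1)"
    proof -
      fix n
      from Q[of n] obtain r m' n' s where h: "morita_mult lM' rM' lN' rN' (a1,a,b,a2) (r,m',n',s) = (0,0,0,0)"
        "morita_mult lM' rM' lN' rN' (r,m',n',s) (a1,a,b,a2) = (r,m',n',s)"
        "\<phi> (1,0,n,0) = morita_add (a1,a,b,a2) (r,m',n',s)" by blast
      then show "?thesis n" using T b3 b4 by (auto simp: morita_mult_def morita_add_def)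
    qed
    define u2 where "u2 n = fst (snd (\<phi> (1,0,n,0)))" for n
    define v2 where "v2 m = fst (snd (snd (\<phi> (1,m,0,0))))" for m
    have "u2 0 = a" "v2 0 = b" using E T by (simp_all add: u2_def v2_def)
    then have U: "u2 0 = a" "v2 0 = b" .
    have "\<forall>m n. \<phi> (1, m, 0, 0) = (0, u2 0, v2 m, 1) \<and> \<phi> (1, 0, n, 0) = (0, u2 n, v2 0, 1)"
    proof (intro allI conjI)
      fix m n
      obtain x where "\<phi> (1,m,0,0) = (0,a,x,1)" using Pm[of m] by blast
      then show "\<phi> (1,m,0,0) = (0, u2 0, v2 m, 1)" using U by (simp add: u2_def v2_def)
      obtain y where "\<phi> (1,0,n,0) = (0,y,b,1)" using Qn[of n] by blast
      then show "\<phi> (1,0,n,0) = (0, u2 n, v2 0, 1)" using U by (simp add: u2_def v2_def)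
    qed
    then show ?thesis by blast
  qed
qed

end
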